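(* Let $g:\mathbb{C}\to\mathbb{C}$ be holomorphic at $0$ with $g(0)=0$ and $g'(0)\neq 0$, let $\varphi:\mathbb{N}\to\mathbb{C}\setminus\{0\}$, and let $a\neq 0$ be a real number. Let $(P_n(x))_{n\ge 0}$ be a sequence of Appell polynomials of type $(g,\varphi)$ with generating function $f$, i.e. $f$ is holomorphic at $0$, $f(0)\neq 0$, and $$\sum_{n\ge 0}P_n(x)\frac{t^n}{\varphi(0)\varphi(1)\cdots\varphi(n)}=f(t)e^{x g(t)}$$ for all $x$ and all $t$ near $0$. Then $P_n(a-x)=(-1)^nP_n(x)$ for all $n\ge0$ and all $x$ if and only if both $g$ and the function $t\mapsto \left(e^{a g(t)}-1\right)f(t)$ are odd.
   Context: Here $\mathbb{N}=\{0,1,2,\dots\}$. A sequence of Appell polynomials of type $(g,\varphi)$ is a sequence of polynomials for which some $f$ holomorphic at $0$ with $f(0)\ne0$ satisfies the displayed identity. *)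

theory Defs
  imports "HOL-Analysis.Analysis" "HOL-Computational_Algebra.Polynomial"
begin

definition odd_near_0 :: "(complex \<Rightarrow> complex) \<Rightarrow> bool" where
  "odd_near_0 h \<longleftrightarrow> (\<forall>\<^sub>F t in nhds 0. h (- t) = - h t)"

definition appell_gen :: "(complex \<Rightarrow> complex) \<Rightarrow> (nat \<Rightarrow> complex) \<Rightarrow> (complex \<Rightarrow> complex)
    \<Rightarrow> (nat \<Rightarrow> complex poly) \<Rightarrow> bool" where
  "appell_gen g \<phi> f P \<longleftrightarrow> f analytic_on {0} \<and> f 0 \<noteq> 0 \<and>
     (\<forall>x. \<forall>\<^sub>F t in nhds 0.
        (\<lambda>n. poly (P n) x * t ^ n / (\<Prod>k\<le>n. \<phi> k)) sums (f t * exp (x * g t)))"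

end

theory Submission
  imports Defs "HOL-Complex_Analysis.Cauchy_Integral_Formula"
begin

lemma exp_small_eq_1:
  fixes z :: complex
  assumes "exp z = 1" "norm z < 2 * pi"
  shows "z = 0"
proof -
  from assms(1) obtain n :: int where re: "Re z = 0" and im: "Im z = of_int (2 * n) * pi"
    unfolding exp_eq_1 by blast
  have "\<bar>Im z\<bar> \<le> norm z" by (rule abs_Im_le_cmod)
  with assms(2) have "\<bar>of_int (2*n) * pi\<bar> < 2 * pi" using im by simp
  hence "\<bar>real_of_int n\<bar> * (2*pi) < 1 * (2*pi)" by (simp add: abs_mult)
  hence "\<bar>real_of_int n\<bar> < 1" using pi_gt_zero by (meson mult_less_cancel_right_pos pi_gt_zero zero_less_mult_iff zero_less_numeral)
  hence "n = 0" by linarith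
  thus ?thesis using re im by (simp add: complex_eqI)
qed

lemma powser_unique0:
  fixes d :: "nat \<Rightarrow> complex"
  assumes "\<forall>\<^sub>F t in nhds 0. (\<lambda>n. d n * t ^ n) sums 0"
  shows "d m = 0"
proof -
  from assms obtain r where r: "r > 0" and H: "\<And>t. dist t 0 < r \<Longrightarrow> (\<lambda>n. d n * t ^ n) sums 0"
    unfolding eventually_nhds_metric by blast
  have d0: "d 0 = 0" using H[of 0] r by simp
  show ?thesis
  proof (rule ccontr)
    assume nz: "d m \<noteq> 0"
    hence "m > 0" using d0 by (cases m) auto
    have sm: "\<And>x::complex. norm (x-0) < r \<Longrightarrow> (\<lambda>n. d n * (x-0)^n) sums ((\<lambda>_::complex. 0::complex) x)"
      using H by (simp add: dist_norm)
    show False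
    proof (rule powser_0_nonzero[of r "0::complex" d "\<lambda>_::complex. 0::complex" m, OF r sm _ nz \<open>m>0\<close>])
      fix s :: real assume s: "0<s" and ne: "\<And>z::complex. z \<in> cball 0 s - {0} \<Longrightarrow> (\<lambda>_::complex. 0::complex) z \<noteq> 0"
      have "complex_of_real s \<in> cball 0 s - {0}" using s by auto
      from ne[OF this] show False by simp
    next
      show "(\<lambda>_::complex. 0::complex) 0 = 0" by simp
    qed
  qed
qed

lemma eventually_nhds0_uminus:
  assumes "eventually P (nhds (0::complex))"
  shows "eventually (\<lambda>t. P (- t)) (nhds 0)"
proof -
  from assms obtain e where e: "e > 0" "\<And>t. dist t 0 < e \<Longrightarrow> P t"
    unfolding eventually_nhds_metric by blast
  have pt: "P (-t)" if "dist t 0 < e" for t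
    using e(2)[of "-t"] that by (simp add: dist_norm)
  show ?thesis unfolding eventually_nhds_metric
  proof (intro exI conjI allI impI)
    show "e > 0" by (rule e(1))
    fix t :: complex assume "dist t 0 < e" thus "P (-t)" by (rule pt)
  qed
qed



lemma L1: "(\<lambda>n. p n * (-t)^n / (F n::complex)) = (\<lambda>n. ((-1)^n * p n / F n) * t^n)"
  by (simp add: power_minus[of t] mult_ac)
lemma L2: "(\<lambda>n. (q n::complex) * t^n / F n) = (\<lambda>n. (q n / F n) * t^n)" by auto
lemma L3: "exp ((ca - 1) * (z::complex)) = exp (ca * z) / exp z"
  by (simp add: left_diff_distrib exp_diff)
lemma L4: "(f::complex) \<noteq> 0 \<Longrightarrow> f * exp (c) / exp (z) = f * exp (c) * exp w \<Longrightarrow> 1 / exp z = exp w"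
  by (simp add: field_simps)
lemma L5: "1 / exp z = exp w \<Longrightarrow> exp (w + (z::complex)) = 1" by (simp add: exp_add field_simps)
lemma L6: "g' = - (z::complex) \<Longrightarrow> fm = f * exp (ca * z) \<Longrightarrow>  (exp (ca * g') - 1) * fm = - ((exp (ca * z) - 1) * f)"
proof -
  assume h: "g' = - z" "fm = f * exp (ca * z)"
  have "exp (ca * g') * exp (ca * z) = 1" using h by (simp add: exp_minus)
  thus ?thesis using h by (simp add: algebra_simps)
qed
lemma L7: "u \<noteq> 0 \<Longrightarrow> (inverse u - 1) * fm = - ((u - 1) * (f::complex)) \<Longrightarrow> (1 - u) * fm = (1 - u) * (u * f)"
proof -
  assume unz: "u \<noteq> 0" and h: "(inverse u - 1) * fm = - ((u - 1) * (f::complex))"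
  hence "u * ((inverse u - 1) * fm) = u * (- ((u - 1) * f))" by simp
  thus ?thesis using unz by (simp add: algebra_simps)
qed
lemma L8: "exp ((ca - x) * (z::complex)) = exp (ca * z) * exp (x * (- z))"
  by (simp add: left_diff_distrib exp_diff exp_minus field_simps)
lemma L9: "(\<lambda>n. c n * t^n) sums A \<Longrightarrow> (\<lambda>n. d n * t^n) sums B \<Longrightarrow> A = (B::complex)
   \<Longrightarrow> (\<lambda>n. (c n - d n) * t^n) sums 0"
proof -
  assume a: "(\<lambda>n. c n * t^n) sums A" "(\<lambda>n. d n * t^n) sums B" "A = B"
  from sums_diff[OF a(1) a(2)] a(3) have "(\<lambda>n. c n * t^n - d n * t^n) sums 0" by simp
  thus ?thesis by (simp add: left_diff_distrib)
qed
lemma L10: "(\<And>n. q n = (-1)^n * p n) \<Longrightarrow> (\<lambda>n. q n * t^n / (F n::complex)) = (\<lambda>n. p n * (-t)^n / F n)"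
  by (simp add: power_minus[of t] mult_ac)
lemma L11: "(F::complex) \<noteq> 0 \<Longrightarrow> q / F - s * p / F = 0 \<Longrightarrow> q = s * p"
  by (simp add: field_simps)

lemma ev_nhds_from_at:
  assumes "eventually P (at (0::complex))" "P 0"
  shows "eventually P (nhds 0)"
  using assms unfolding eventually_at_filter by (auto elim!: eventually_mono)

theorem mainTheorem3:
  fixes g f :: "complex \<Rightarrow> complex" and \<phi> :: "nat \<Rightarrow> complex"
    and P :: "nat \<Rightarrow> complex poly" and a :: real
  assumes "g analytic_on {0}" and "g 0 = 0" and "deriv g 0 \<noteq> 0"
    and "\<forall>n. \<phi> n \<noteq> 0"
    and "a \<noteq> 0"
    and "appell_gen g \<phi> f P"
  shows "(\<forall>n x. poly (P n) (complex_of_real a - x) = (-1) ^ n * poly (P n) x)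
     \<longleftrightarrow> (odd_near_0 g \<and> odd_near_0 (\<lambda>t. (exp (complex_of_real a * g t) - 1) * f t))"
proof -
  define ca where "ca = complex_of_real a"
  define \<Phi> where "\<Phi> n = (\<Prod>k\<le>n. \<phi> k)" for n
  have \<Phi>nz: "\<Phi> n \<noteq> 0" for n using assms(4) by (simp add: \<Phi>_def)
  have fan: "f analytic_on {0}" and f0: "f 0 \<noteq> 0"
    and A: "\<And>x. \<forall>\<^sub>F t in nhds 0. (\<lambda>n. poly (P n) x * t^n / \<Phi> n) sums (f t * exp (x * g t))"
    using assms(6) unfolding appell_gen_def \<Phi>_def by auto
  have gc: "isCont g 0" using assms(1) by (rule analytic_at_imp_isCont)
  have fc: "isCont f 0" using fan by (rule analytic_at_imp_isCont)
  have gsmall: "\<forall>\<^sub>F t in nhds 0. norm (g t) < e" if "e > 0" for e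
  proof (rule ev_nhds_from_at)
    have "(g \<longlongrightarrow> 0) (at 0)" using gc assms(2) by (simp add: isCont_def)
    from tendstoD[OF this \<open>e>0\<close>] show "\<forall>\<^sub>F t in at 0. norm (g t) < e" by (simp add: dist_norm)
    show "norm (g 0) < e" using assms(2) that by simp
  qed
  have fnz: "\<forall>\<^sub>F t in nhds 0. f t \<noteq> 0"
  proof (rule ev_nhds_from_at)
    have "(f \<longlongrightarrow> f 0) (at 0)" using fc by (simp add: isCont_def)
    from tendsto_imp_eventually_ne[OF this f0] show "\<forall>\<^sub>F t in at 0. f t \<noteq> 0" .
    show "f 0 \<noteq> 0" by (rule f0)
  qed
  have gnz: "\<forall>\<^sub>F t in nhds 0. t \<noteq> 0 \<longrightarrow> g t \<noteq> 0"
  proof -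
    have "(g has_field_derivative deriv g 0) (at 0)"
      using analytic_on_imp_differentiable_at[OF assms(1)] DERIV_deriv_iff_field_differentiable by blast
    hence "((\<lambda>y. (g y - g 0) / (y - 0)) \<longlongrightarrow> deriv g 0) (at 0)"
      by (simp add: has_field_derivative_iff)
    from tendsto_imp_eventually_ne[OF this assms(3)]
    have "\<forall>\<^sub>F t in at 0. g t \<noteq> 0" by (rule eventually_mono) (use assms(2) in auto)
    thus ?thesis by (simp add: eventually_at_filter)
  qed
  have coef: "poly (P n) (ca - x) = (-1)^n * poly (P n) x"
    if ev: "\<forall>\<^sub>F t in nhds 0. f t * exp ((ca - x) * g t) = f (-t) * exp (x * g (-t))" for n x
  proof -
    have "\<forall>\<^sub>F t in nhds 0. (\<lambda>n. (poly (P n) (ca - x) / \<Phi> n - (-1)^n * poly (P n) x / \<Phi> n) * t^n) sums 0"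
      using A[of "ca - x"] eventually_nhds0_uminus[OF A[of x]] ev
    proof eventually_elim
      case (elim t)
      have e1: "(\<lambda>n. poly (P n) x * (-t)^n / \<Phi> n) = (\<lambda>n. ((-1)^n * poly (P n) x / \<Phi> n) * t^n)"
        by (rule L1)
      have e2: "(\<lambda>n. poly (P n) (ca-x) * t^n / \<Phi> n) = (\<lambda>n. (poly (P n) (ca-x) / \<Phi> n) * t^n)"
        by (rule L2)
      from elim(1) have s1: "(\<lambda>n. (poly (P n) (ca-x) / \<Phi> n) * t^n) sums (f t * exp ((ca - x) * g t))"
        unfolding e2 .
      from elim(2) have s2: "(\<lambda>n. ((-1)^n * poly (P n) x / \<Phi> n) * t^n) sums (f (-t) * exp (x * g (-t)))"
        unfolding e1 .
      show ?case by (rule L9[OF s1 s2 elim(3)])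
    qed
    from powser_unique0[OF this, of n]
    have "poly (P n) (ca-x) / \<Phi> n - (-1)^n * poly (P n) x / \<Phi> n = 0" .
    with \<Phi>nz[of n] show ?thesis by (rule L11)
  qed
  have evsym: "\<forall>\<^sub>F t in nhds 0. f t * exp ((ca - x) * g t) = f (-t) * exp (x * g (-t))"
    if S: "\<forall>n x. poly (P n) (ca - x) = (-1)^n * poly (P n) x" for x
    using A[of "ca - x"] eventually_nhds0_uminus[OF A[of x]]
  proof eventually_elim
    case (elim t)
    have eq: "(\<lambda>n. poly (P n) (ca - x) * t^n / \<Phi> n) = (\<lambda>n. poly (P n) x * (-t)^n / \<Phi> n)"
      by (rule L10) (use S in blast)
    have s1: "(\<lambda>n. poly (P n) x * (-t)^n / \<Phi> n) sums (f t * exp ((ca - x) * g t))"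
      using elim(1) unfolding eq .
    show ?case by (rule sums_unique2[OF s1 elim(2)])
  qed
  show ?thesis
    unfolding ca_def[symmetric] odd_near_0_def
  proof
    assume S: "\<forall>n x. poly (P n) (ca - x) = (-1)^n * poly (P n) x"
    have pi0: "pi > 0" by (rule pi_gt_zero)
    have main: "\<forall>\<^sub>F t in nhds 0. g (-t) = - g t \<and> f (-t) = f t * exp (ca * g t)"
      using evsym[OF S, of 0] evsym[OF S, of 1] fnz gsmall[OF pi0] eventually_nhds0_uminus[OF gsmall[OF pi0]]
    proof eventually_elim
      case (elim t)
      have k0: "f (-t) = f t * exp (ca * g t)" using elim(1) by simp
      have "f t * exp (ca * g t) / exp (g t) = f t * exp (ca * g t) * exp (g (-t))"
        using elim(2) k0 unfolding L3[of ca "g t"] by (simp only: mult_1 times_divide_eq_right mult.assoc)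
      with elim(3) have "1 / exp (g t) = exp (g (-t))"
        by (rule L4)
      hence "exp (g (-t) + g t) = 1" by (rule L5)
      moreover have "norm (g (-t) + g t) < 2 * pi"
        using norm_triangle_ineq[of "g (-t)" "g t"] elim(4) elim(5) by simp
      ultimately have "g (-t) + g t = 0" by (rule exp_small_eq_1)
      hence "g (-t) = - g t" by (simp add: eq_neg_iff_add_eq_0)
      with k0 show ?case by simp
    qed
    show "(\<forall>\<^sub>F t in nhds 0. g (- t) = - g t) \<and>
          (\<forall>\<^sub>F t in nhds 0. (exp (ca * g (- t)) - 1) * f (- t) = - ((exp (ca * g t) - 1) * f t))"
    proof
      show "\<forall>\<^sub>F t in nhds 0. g (- t) = - g t" using main by (rule eventually_mono) simp
      show "\<forall>\<^sub>F t in nhds 0. (exp (ca * g (- t)) - 1) * f (- t) = - ((exp (ca * g t) - 1) * f t)"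
        using main
      proof (rule eventually_mono)
        fix t assume h: "g (-t) = - g t \<and> f (-t) = f t * exp (ca * g t)"
        show "(exp (ca * g (- t)) - 1) * f (- t) = - ((exp (ca * g t) - 1) * f t)"
          using h by (intro L6) auto
      qed
    qed
  next
    assume H: "(\<forall>\<^sub>F t in nhds 0. g (- t) = - g t) \<and>
          (\<forall>\<^sub>F t in nhds 0. (exp (ca * g (- t)) - 1) * f (- t) = - ((exp (ca * g t) - 1) * f t))"
    have apos: "2 * pi / \<bar>a\<bar> > 0" using assms(5) by simp
    have ev: "\<forall>\<^sub>F t in nhds 0. f t * exp ((ca - x) * g t) = f (-t) * exp (x * g (-t))" for x
      using conjunct1[OF H] conjunct2[OF H] gnz gsmall[OF apos]
    proof eventually_elim
      case (elim t)
      show ?case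
      proof (cases "t = 0")
        case True thus ?thesis using assms(2) by simp
      next
        case False
        define u where "u = exp (ca * g t)"
        have gt: "g t \<noteq> 0" using elim(3) False by simp
        have unz: "u \<noteq> 0" by (simp add: u_def)
        have "norm (ca * g t) = \<bar>a\<bar> * norm (g t)" by (simp add: ca_def norm_mult)
        also have "\<dots> < \<bar>a\<bar> * (2 * pi / \<bar>a\<bar>)"
          using elim(4) assms(5) by (intro mult_strict_left_mono) auto
        also have "\<dots> = 2 * pi" using assms(5) by simp
        finally have "norm (ca * g t) < 2 * pi" .
        moreover have "ca * g t \<noteq> 0" using gt assms(5) by (simp add: ca_def)
        ultimately have u1: "u \<noteq> 1" unfolding u_def using exp_small_eq_1 by blast
        have inv: "exp (ca * g (-t)) = inverse u" unfolding elim(1) u_def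
          by (simp only: mult_minus_right exp_minus)
        from elim(2) have "(inverse u - 1) * f (-t) = - ((u - 1) * f t)"
          unfolding inv u_def[symmetric] .
        with unz have "(1 - u) * f (-t) = (1 - u) * (u * f t)" by (rule L7)
        hence fm: "f (-t) = u * f t" using u1 by simp
        have "exp ((ca - x) * g t) = u * exp (x * g (-t))"
          unfolding elim(1) u_def by (rule L8)
        thus ?thesis using fm by (simp only: mult_ac)
      qed
    qed
    show "\<forall>n x. poly (P n) (ca - x) = (-1)^n * poly (P n) x"
      using coef[OF ev] by blast
  qed
qed

end
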